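(* Let $B$ be a $p\times q$ matrix, $G$ a $q\times q$ symmetric matrix and $G'$ a $p\times p$ symmetric matrix, and let $E,F$ be $q\times q$ symmetric matrices with $E+F=G$. Let $$A=\begin{bmatrix} G' & B & B\\ B^T & 0 & G\\ B^T & G & 0\end{bmatrix},\qquad D=\begin{bmatrix} G' & B & B\\ B^T & E & F\\ B^T & F & E\end{bmatrix},$$ both of size $(p+2q)\times(p+2q)$. Then $A\oplus\begin{bmatrix} E & F\\ F & E\end{bmatrix}$ and $D\oplus\begin{bmatrix}0 & G\\ G & 0\end{bmatrix}$ are cospectral.
   Context: For matrices $X,Y$, $X\oplus Y=\begin{bmatrix} X&0\\0&Y\end{bmatrix}$, and $0$ denotes a zero matrix of appropriate size. Two square matrices are cospectral if they have the same eigenvalues with the same multiplicities. *)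

theory Defs
  imports "Jordan_Normal_Form.Char_Poly"
begin

definition dsum_mat :: "'a::zero mat \<Rightarrow> 'a mat \<Rightarrow> 'a mat" where
  "dsum_mat X Y = four_block_mat X (0\<^sub>m (dim_row X) (dim_col Y)) (0\<^sub>m (dim_row Y) (dim_col X)) Y"

definition hcat_mat :: "'a::zero mat \<Rightarrow> 'a mat \<Rightarrow> 'a mat" where
  "hcat_mat X Y = four_block_mat X Y (0\<^sub>m 0 (dim_col X)) (0\<^sub>m 0 (dim_col Y))"

definition vcat_mat :: "'a::zero mat \<Rightarrow> 'a mat \<Rightarrow> 'a mat" where
  "vcat_mat X Y = four_block_mat X (0\<^sub>m (dim_row X) 0) Y (0\<^sub>m (dim_row Y) 0)"

definition eig_mult :: "real mat \<Rightarrow> complex \<Rightarrow> nat" where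
  "eig_mult M z = order z (char_poly (map_mat complex_of_real M))"

definition cospectral :: "real mat \<Rightarrow> real mat \<Rightarrow> bool" where
  "cospectral M N \<longleftrightarrow> square_mat M \<and> square_mat N \<and> (\<forall>z. eig_mult M z = eig_mult N z)"

end

theory Submission
  imports Defs
begin


definition dl :: "nat \<Rightarrow> nat \<Rightarrow> complex" where "dl k x = (if k = x then 1 else 0)"

definition sS :: "nat \<Rightarrow> nat \<Rightarrow> nat \<Rightarrow> nat \<Rightarrow> complex" where
 "sS p q i k =
  (if i<p then 2 * dl k i
   else if i<p+q then dl k i + dl k (i+q) + dl k (i+2*q) - dl k (i+3*q)
   else if i<p+2*q then dl k (i-q) + dl k i - dl k (i+q) + dl k (i+2*q)
   else if i<p+3*q then dl k (i-2*q) - dl k (i-q) + dl k i + dl k (i+q)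
   else - dl k (i-3*q) + dl k (i-2*q) + dl k (i-q) + dl k i)"

definition sF :: "nat \<Rightarrow> nat \<Rightarrow> nat \<Rightarrow> (nat \<Rightarrow> complex) \<Rightarrow> complex" where
 "sF p q i f =
  (if i<p then 2 * f i
   else if i<p+q then f i + f (i+q) + f (i+2*q) - f (i+3*q)
   else if i<p+2*q then f (i-q) + f i - f (i+q) + f (i+2*q)
   else if i<p+3*q then f (i-2*q) - f (i-q) + f i + f (i+q)
   else - f (i-3*q) + f (i-2*q) + f (i-q) + f i)"

lemma sum_dl: "x < N \<Longrightarrow> (\<Sum>k\<in>{0..<N}. dl k x * f k) = f x"
proof -
  have "(\<lambda>k. dl k x * f k) = (\<lambda>k. if k = x then f x else 0)" by (auto simp: dl_def)
  show "x < N \<Longrightarrow> ?thesis" unfolding sum.cong[OF refl, of _ "\<lambda>k. dl k x * f k"] \<open>_ = _\<close> by simp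
qed

lemma sS_sum: assumes "i < p + 4*q"
  shows "(\<Sum>k\<in>{0..<p+4*q}. sS p q i k * f k) = sF p q i f"
proof -
  have d: "\<And>x. x < p+4*q \<Longrightarrow> (\<Sum>k\<in>{0..<p+4*q}. dl k x * f k) = f x" by (rule sum_dl)
  show ?thesis using assms
    unfolding sS_def sF_def
    by (simp add: ring_distribs sum.distrib sum_subtractf d sum_distrib_left[symmetric] mult.assoc)
qed


lemma blk5: "(i::nat) < p+4*q \<Longrightarrow> i<p \<or> (\<exists>r<q. i = p+r) \<or> (\<exists>r<q. i=p+q+r) \<or> (\<exists>r<q. i=p+2*q+r) \<or> (\<exists>r<q. i=p+3*q+r)"
proof -
  assume a: "i < p+4*q"
  show ?thesis
  proof (cases "i<p")
    case False
    then obtain j where j: "i = p + j" using le_Suc_ex by (metis not_less)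
    show ?thesis
    proof (cases "j<q")
      case False
      then obtain j2 where j2: "j = q + j2" using le_Suc_ex by (metis not_less)
      show ?thesis
      proof (cases "j2<q")
        case False
        then obtain j3 where j3: "j2 = q + j3" using le_Suc_ex by (metis not_less)
        show ?thesis
        proof (cases "j3<q")
          case False
          then obtain j4 where j4: "j3 = q + j4" using le_Suc_ex by (metis not_less)
          have "j4 < q" using a j j2 j3 j4 by simp
          then show ?thesis using j j2 j3 j4 by (auto simp: algebra_simps numeral_eq_Suc)
        qed (use j j2 j3 in \<open>auto simp: algebra_simps numeral_eq_Suc\<close>)
      qed (use j j2 in \<open>auto simp: algebra_simps numeral_eq_Suc\<close>)
    qed (use j in auto)
  qed simp
qed
lemma sS_sym': "i < p+4*q \<Longrightarrow> k < p+4*q \<Longrightarrow> sS p q i k = sS p q k i"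
  apply (drule blk5, drule blk5)
  apply (elim disjE exE; simp add: sS_def dl_def)
  done
lemma sS_sum2: assumes "j < p + 4*q"
  shows "(\<Sum>k\<in>{0..<p+4*q}. f k * sS p q k j) = sF p q j f"
proof -
  have "(\<Sum>k\<in>{0..<p+4*q}. f k * sS p q k j) = (\<Sum>k\<in>{0..<p+4*q}. sS p q j k * f k)"
    by (rule sum.cong, insert assms sS_sym', auto simp: mult.commute)
  then show ?thesis using sS_sum[OF assms] by simp
qed



lemma SS: assumes "i < p+4*q" "j < p+4*q"
  shows "sF p q i (\<lambda>k. sS p q k j) = (if i = j then 4 else 0)"
  using blk5[OF assms(1)] blk5[OF assms(2)]
  apply (elim disjE exE)
  apply (simp_all add: sF_def)
  apply (simp_all add: sS_def dl_def)
  done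

theorem theorem3p18:
  fixes p q :: nat and B G G' E F :: "real mat"
  assumes "B \<in> carrier_mat p q"
    and "G \<in> carrier_mat q q" and "transpose_mat G = G"
    and "G' \<in> carrier_mat p p" and "transpose_mat G' = G'"
    and "E \<in> carrier_mat q q" and "transpose_mat E = E"
    and "F \<in> carrier_mat q q" and "transpose_mat F = F"
    and "E + F = G"
  shows "cospectral
     (dsum_mat
        (four_block_mat G' (hcat_mat B B) (vcat_mat (transpose_mat B) (transpose_mat B))
           (four_block_mat (0\<^sub>m q q) G G (0\<^sub>m q q)))
        (four_block_mat E F F E))
     (dsum_mat
        (four_block_mat G' (hcat_mat B B) (vcat_mat (transpose_mat B) (transpose_mat B))
           (four_block_mat E F F E))
        (four_block_mat (0\<^sub>m q q) G G (0\<^sub>m q q)))"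
  (is "cospectral ?M1 ?M2")
proof -
  define N where "N = p+4*q"
  define S :: "complex mat" where "S = mat N N (\<lambda>(i,j). sS p q i j)"
  define Q :: "complex mat" where "Q = (1/4) \<cdot>\<^sub>m S"
  define C1 where "C1 = map_mat complex_of_real ?M1"
  define C2 where "C2 = map_mat complex_of_real ?M2"
  have BG: "B \<in> carrier_mat p q" "G \<in> carrier_mat q q" "G' \<in> carrier_mat p p"
     "E \<in> carrier_mat q q" "F \<in> carrier_mat q q" using assms by auto
  have dims: "dim_row B = p" "dim_col B = q" "dim_row G = q" "dim_col G = q"
    "dim_row G' = p" "dim_col G' = p" "dim_row E = q" "dim_col E = q" "dim_row F = q" "dim_col F = q"
    using BG by auto
  have M1c: "?M1 \<in> carrier_mat N N"
    unfolding carrier_mat_def by (simp add: dims dsum_mat_def hcat_mat_def vcat_mat_def N_def)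
  have M2c: "?M2 \<in> carrier_mat N N"
    unfolding carrier_mat_def by (simp add: dims dsum_mat_def hcat_mat_def vcat_mat_def N_def)
  have C1c: "C1 \<in> carrier_mat N N" using M1c C1_def by simp
  have C2c: "C2 \<in> carrier_mat N N" using M2c C2_def by simp
  have Sc: "S \<in> carrier_mat N N" "Q \<in> carrier_mat N N" using S_def Q_def by auto
  have Gij: "\<And>i j. i < q \<Longrightarrow> j < q \<Longrightarrow> G $$ (i,j) = E $$ (i,j) + F $$ (i,j)"
  proof -
    fix i j assume "i < q" "j < q"
    have "G $$ (i,j) = (E+F) $$ (i,j)" using assms(10) by simp
    also have "\<dots> = E $$ (i,j) + F $$ (i,j)" using BG \<open>i<q\<close> \<open>j<q\<close> by simp
    finally show "G $$ (i,j) = E $$ (i,j) + F $$ (i,j)" .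
  qed
  have SSm: "S * S = 4 \<cdot>\<^sub>m 1\<^sub>m N"
  proof (rule eq_matI)
    fix i j assume ij: "i < dim_row (4 \<cdot>\<^sub>m 1\<^sub>m N)" "j < dim_col (4 \<cdot>\<^sub>m (1\<^sub>m N :: complex mat))"
    have "(S * S) $$ (i,j) = (\<Sum>k\<in>{0..<N}. sS p q i k * sS p q k j)"
      using ij by (simp add: S_def scalar_prod_def)
    also have "\<dots> = sF p q i (\<lambda>k. sS p q k j)" using sS_sum ij N_def by simp
    also have "\<dots> = (4 \<cdot>\<^sub>m 1\<^sub>m N) $$ (i,j)" using SS ij N_def by simp
    finally show "(S * S) $$ (i,j) = (4 \<cdot>\<^sub>m 1\<^sub>m N) $$ (i,j)" .
  qed (auto simp: S_def)
  have SC: "S * C1 = C2 * S"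
  proof (rule eq_matI)
    fix i j assume ij: "i < dim_row (C2 * S)" "j < dim_col (C2 * S)"
    hence ij': "i < p+4*q" "j < p+4*q" using C2c Sc N_def by auto
    have "(S * C1) $$ (i,j) = (\<Sum>k\<in>{0..<N}. sS p q i k * C1 $$ (k,j))"
      using ij C1c C2c Sc by (simp add: S_def scalar_prod_def)
    also have "\<dots> = sF p q i (\<lambda>k. C1 $$ (k,j))" using sS_sum ij' N_def by simp
    also have "\<dots> = sF p q j (\<lambda>k. C2 $$ (i,k))"
      unfolding C1_def C2_def
      using blk5[OF ij'(1)] blk5[OF ij'(2)]
      apply (elim disjE exE)
      apply (simp_all add: sF_def)
      apply (simp_all add: dims dsum_mat_def hcat_mat_def vcat_mat_def Gij)
      done
    also have "\<dots> = (\<Sum>k\<in>{0..<N}. C2 $$ (i,k) * sS p q k j)" using sS_sum2 ij' N_def by simp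
    also have "\<dots> = (C2 * S) $$ (i,j)"
      using ij C1c C2c Sc by (simp add: S_def scalar_prod_def)
    finally show "(S * C1) $$ (i,j) = (C2 * S) $$ (i,j)" .
  qed (use C1c C2c Sc in auto)
  have SQ: "S * Q = 1\<^sub>m N" "Q * S = 1\<^sub>m N"
    unfolding Q_def using Sc SSm by (auto simp: mult_smult_distrib mult_smult_assoc_mat)
  have "C2 = S * C1 * Q"
  proof -
    have "S * C1 * Q = C2 * S * Q" using SC by simp
    also have "\<dots> = C2 * (S * Q)" using Sc C2c by (simp add: assoc_mult_mat[of _ N N _ N _ N])
    also have "\<dots> = C2" using SQ C2c by simp
    finally show ?thesis by simp
  qed
  hence "similar_mat C2 C1" using SQ Sc C1c C2c by (intro similar_matI[of C2 C1 S Q N]) auto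
  hence "char_poly C2 = char_poly C1" by (rule char_poly_similar)
  then show ?thesis using M1c M2c unfolding cospectral_def eig_mult_def C1_def C2_def by auto
qed
end
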